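(* Let $d\ge1$, $z>0$, let $G$ satisfy condition (A) and let $Z$ be a $G$-$\mathrm{BESQ}^d_z$. For $b>z$ let $\tau_b=\inf\{t\ge0: Z_t\ge b\}$. Then for each fixed $b>z$, $\lim_{t\uparrow\infty}\mathrm{c}(\{\tau_b>t\})=0$. Moreover, for each $t\ge0$, $\lim_{b\uparrow\infty}\mathrm{c}(\{\tau_b<t\})=0$.
   Context: Framework: $\Omega=C_0(\mathbb{R}^+;\mathbb{R}^d)$ with canonical process $B$, a $d$-dimensional $G$-Brownian motion under the $G$-expectation $\hat{\mathbb{E}}$ for monotone sublinear $G:\mathbb{S}_d\to\mathbb{R}$. There is a weakly compact family $\mathcal{P}$ of probability measures with $\hat{\mathbb{E}}[\xi]=\sup_{P\in\mathcal{P}}E_P[\xi]$; capacity $\mathrm{c}(A)=\sup_{P\in\mathcal{P}}P(A)$. Condition (A): $G(A)=G'(\mathrm{tr}[A])$ with $G'(a)=\frac12(\bar\sigma^2a^+-\underline{\sigma}^2a^-)$, $0<\underline{\sigma}\le\bar\sigma<\infty$. For $x\in\mathbb{R}^d$, $Z_t=|B_t+x|^2$ is the squared $G$-Bessel process of dimension $d$ started at $z=|x|^2$ ($G$-$\mathrm{BESQ}^d_z$). *)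

theory Defs
  imports "HOL-Probability.Probability"
begin

text \<open>Paths are represented as functions on the whole real line
  that vanish for negative times, so Omega is in bijection with C_0([0,oo); R^d).
  The canonical process is B_t(w) = w t.\<close>

definition Omega :: "(real \<Rightarrow> 'a::real_normed_vector) set" where
  "Omega = {w. continuous_on {0..} w \<and> w 0 = 0 \<and> (\<forall>t<0. w t = 0)}"

text \<open>The sigma-algebra generated by the coordinate maps (= Borel sets of the
  topology of locally uniform convergence).\<close>
definition Wiener :: "(real \<Rightarrow> 'a::euclidean_space) measure" where
  "Wiener = sigma Omega {{w \<in> Omega. w t \<in> A} | t A. 0 \<le> t \<and> A \<in> sets borel}"

definition lu_conv :: "(nat \<Rightarrow> real \<Rightarrow> 'a::real_normed_vector) \<Rightarrow> (real \<Rightarrow> 'a) \<Rightarrow> bool" where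
  "lu_conv ws w \<longleftrightarrow> (\<forall>T e. 0 < e \<longrightarrow>
     eventually (\<lambda>n. \<forall>t\<in>{0..T}. dist (ws n t) (w t) < e) sequentially)"

text \<open>Bounded continuous functionals on Omega (the topology is metrizable, so
  sequential continuity is continuity).\<close>
definition bcont_fun :: "((real \<Rightarrow> 'a::real_normed_vector) \<Rightarrow> real) \<Rightarrow> bool" where
  "bcont_fun f \<longleftrightarrow> (\<exists>K. \<forall>w\<in>Omega. \<bar>f w\<bar> \<le> K) \<and>
     (\<forall>ws w. (\<forall>n. ws n \<in> Omega) \<longrightarrow> w \<in> Omega \<longrightarrow> lu_conv ws w \<longrightarrow>
        (\<lambda>n. f (ws n)) \<longlonglongrightarrow> f w)"

definition weak_conv_paths :: "(nat \<Rightarrow> (real \<Rightarrow> 'a::euclidean_space) measure) \<Rightarrow> (real \<Rightarrow> 'a) measure \<Rightarrow> bool" where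
  "weak_conv_paths Ps P \<longleftrightarrow> (\<forall>f :: (real \<Rightarrow> 'a) \<Rightarrow> real. bcont_fun f \<longrightarrow>
     (\<lambda>n. integral\<^sup>L (Ps n) f) \<longlonglongrightarrow> integral\<^sup>L P f)"

text \<open>Weak compactness (sequential form; the weak topology on probability measures
  on the Polish space Omega is metrizable).\<close>
definition weakly_compact :: "(real \<Rightarrow> 'a::euclidean_space) measure set \<Rightarrow> bool" where
  "weakly_compact \<P> \<longleftrightarrow> (\<forall>Ps :: nat \<Rightarrow> (real \<Rightarrow> 'a) measure. (\<forall>n. Ps n \<in> \<P>) \<longrightarrow>
     (\<exists>(r :: nat \<Rightarrow> nat) P. strict_mono r \<and> P \<in> \<P> \<and> weak_conv_paths (Ps \<circ> r) P))"

definition upE :: "(real \<Rightarrow> 'a) measure set \<Rightarrow> ((real \<Rightarrow> 'a) \<Rightarrow> real) \<Rightarrow> real" where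
  "upE \<P> \<xi> = (SUP P\<in>\<P>. integral\<^sup>L P \<xi>)"

definition cap :: "(real \<Rightarrow> 'a) measure set \<Rightarrow> (real \<Rightarrow> 'a) set \<Rightarrow> real" where
  "cap \<P> A = (SUP P\<in>\<P>. measure P A)"

text \<open>A point of (R^d)^n x R^d is encoded as (x, y) with x :: nat => 'a, only x 0, ..., x (n-1)
  being relevant.\<close>
definition nrm :: "nat \<Rightarrow> (nat \<Rightarrow> 'a::real_normed_vector) \<Rightarrow> 'a \<Rightarrow> real" where
  "nrm n x y = (\<Sum>i<n. norm (x i)) + norm y"

definition lip_poly :: "nat \<Rightarrow> ((nat \<Rightarrow> 'a::real_normed_vector) \<Rightarrow> 'a \<Rightarrow> real) \<Rightarrow> bool" where
  "lip_poly n \<phi> \<longleftrightarrow> (\<exists>C (m::nat). \<forall>x x' y y'.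
     \<bar>\<phi> x y - \<phi> x' y'\<bar> \<le> C * (1 + nrm n x y ^ m + nrm n x' y' ^ m) * nrm n (x - x') (y - y'))"

definition lip_poly1 :: "('a::real_normed_vector \<Rightarrow> real) \<Rightarrow> bool" where
  "lip_poly1 \<phi> \<longleftrightarrow> (\<exists>C (m::nat). \<forall>y y'.
     \<bar>\<phi> y - \<phi> y'\<bar> \<le> C * (1 + norm y ^ m + norm y' ^ m) * norm (y - y'))"

definition cyl :: "nat \<Rightarrow> (nat \<Rightarrow> real) \<Rightarrow> (real \<Rightarrow> 'a::zero) \<Rightarrow> nat \<Rightarrow> 'a" where
  "cyl n ts w = (\<lambda>i. if i < n then w (ts i) else 0)"

definition G_BM :: "(real \<Rightarrow> 'a::euclidean_space) measure set \<Rightarrow> bool" where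
  "G_BM \<P> \<longleftrightarrow>
     \<comment> \<open>finiteness of all moments (so that the upper expectation is defined on C_{l,Lip} cylinders)\<close>
     (\<forall>t\<ge>0. \<forall>p::nat. (\<forall>P\<in>\<P>. integrable P (\<lambda>w. norm (w t) ^ p)) \<and>
        bdd_above ((\<lambda>P. integral\<^sup>L P (\<lambda>w. norm (w t) ^ p)) ` \<P>)) \<and>
     \<comment> \<open>stationarity of increments\<close>
     (\<forall>t\<ge>0. \<forall>s\<ge>0. \<forall>\<phi>. lip_poly1 \<phi> \<longrightarrow>
        upE \<P> (\<lambda>w. \<phi> (w (t + s) - w t)) = upE \<P> (\<lambda>w. \<phi> (w s))) \<and>
     \<comment> \<open>independence of increments\<close>
     (\<forall>t\<ge>0. \<forall>s\<ge>0. \<forall>n ts \<phi>. (\<forall>i<n. 0 \<le> ts i \<and> ts i \<le> t) \<longrightarrow> lip_poly n \<phi> \<longrightarrow>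
        upE \<P> (\<lambda>w. \<phi> (cyl n ts w) (w (t + s) - w t)) =
        upE \<P> (\<lambda>w. upE \<P> (\<lambda>w'. \<phi> (cyl n ts w) (w' (t + s) - w' t)))) \<and>
     \<comment> \<open>zero mean\<close>
     (\<forall>t\<ge>0. \<forall>a. upE \<P> (\<lambda>w. a \<bullet> w t) = 0 \<and> upE \<P> (\<lambda>w. - (a \<bullet> w t)) = 0) \<and>
     \<comment> \<open>third moment condition\<close>
     ((\<lambda>t. upE \<P> (\<lambda>w. norm (w t) ^ 3) / t) \<longlongrightarrow> 0) (at_right 0)"

definition Gfun :: "(real \<Rightarrow> real^'d) measure set \<Rightarrow> real^'d^'d \<Rightarrow> real" where
  "Gfun \<P> A = upE \<P> (\<lambda>w. (A *v w 1) \<bullet> w 1) / 2"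

definition G' :: "real \<Rightarrow> real \<Rightarrow> real \<Rightarrow> real" where
  "G' sl sh a = (sh\<^sup>2 * max a 0 - sl\<^sup>2 * max (- a) 0) / 2"

definition condA :: "(real \<Rightarrow> real^'d) measure set \<Rightarrow> real \<Rightarrow> real \<Rightarrow> bool" where
  "condA \<P> sl sh \<longleftrightarrow> 0 < sl \<and> sl \<le> sh \<and>
     (\<forall>A::real^'d^'d. transpose A = A \<longrightarrow> Gfun \<P> A = G' sl sh (trace A))"

text \<open>Standing framework: P is a nonempty weakly compact family of probability measures on
  Omega whose upper expectation is the G-expectation, i.e. under which the canonical process
  is a G-Brownian motion, with G satisfying condition (A).\<close>
definition G_framework :: "(real \<Rightarrow> real^'d) measure set \<Rightarrow> real \<Rightarrow> real \<Rightarrow> bool" where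
  "G_framework \<P> sl sh \<longleftrightarrow> \<P> \<noteq> {} \<and>
     (\<forall>P\<in>\<P>. prob_space P \<and> sets P = sets Wiener \<and> space P = Omega) \<and>
     weakly_compact \<P> \<and> G_BM \<P> \<and> condA \<P> sl sh"

definition BESQ :: "real^'d \<Rightarrow> real \<Rightarrow> (real \<Rightarrow> real^'d) \<Rightarrow> real" where
  "BESQ x t w = (norm (w t + x))\<^sup>2"

definition hit_time :: "real^'d \<Rightarrow> real \<Rightarrow> (real \<Rightarrow> real^'d) \<Rightarrow> ereal" where
  "hit_time x b w = Inf {ereal t | t. 0 \<le> t \<and> BESQ x t w \<ge> b}"

end

theory Submission
  imports Defs
begin


lemma fw_P:
  assumes "G_framework \<P> sl sh" "P \<in> \<P>"
  shows "prob_space P" "sets P = sets Wiener" "space P = Omega"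
  using assms unfolding G_framework_def by auto

lemma Wiener_gen_sub: "{{w \<in> Omega. w t \<in> A} | t A. 0 \<le> t \<and> A \<in> sets borel} \<subseteq> Pow Omega"
  by auto

lemma space_Wiener: "space Wiener = Omega"
  unfolding Wiener_def by (rule space_measure_of) auto

lemma meas_coord_W:
  fixes s :: real
  assumes "0 \<le> s"
  shows "(\<lambda>w::real \<Rightarrow> 'a::euclidean_space. w s) \<in> borel_measurable Wiener"
proof (rule measurableI)
  fix A :: "'a set" assume A: "A \<in> sets borel"
  have "(\<lambda>w. w s) -` A \<inter> space Wiener = {w \<in> Omega. w s \<in> A}"
    by (auto simp: space_Wiener)
  also have "\<dots> \<in> sets Wiener"
    unfolding Wiener_def
    apply (subst sets_measure_of[OF Wiener_gen_sub])
    apply (rule sigma_sets.Basic) using A assms by blast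
  finally show "(\<lambda>w. w s) -` A \<inter> space Wiener \<in> sets Wiener" .
qed auto

lemma meas_coord:
  fixes \<P> :: "(real \<Rightarrow> real^'d) measure set"
  assumes "G_framework \<P> sl sh" "P \<in> \<P>" "0 \<le> s"
  shows "(\<lambda>w. w s) \<in> borel_measurable P"
proof -
  have "sets P = sets Wiener" using fw_P[OF assms(1,2)] by auto
  then have "measurable P (borel :: (real^'d) measure) = measurable Wiener borel"
    by (rule measurable_cong_sets) simp
  then show ?thesis using meas_coord_W[OF assms(3)] by blast
qed

lemma int_le:
  fixes f h :: "'b \<Rightarrow> real"
  assumes "integrable M h" "\<And>x. x \<in> space M \<Longrightarrow> f x \<le> h x" "\<And>x. x \<in> space M \<Longrightarrow> 0 \<le> h x"
  shows "integral\<^sup>L M f \<le> integral\<^sup>L M h"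
proof (cases "integrable M f")
  case True then show ?thesis using assms by (intro integral_mono) auto
next
  case False then have "integral\<^sup>L M f = 0" by (simp add: not_integrable_integral_eq)
  then show ?thesis using assms by (simp add: integral_nonneg_AE)
qed

lemma upE_le:
  assumes "\<P> \<noteq> {}" "\<And>P. P \<in> \<P> \<Longrightarrow> integral\<^sup>L P f \<le> c"
  shows "upE \<P> f \<le> c"
  unfolding upE_def using assms by (intro cSUP_least) auto

lemma upE_ge:
  assumes "P \<in> \<P>" "\<And>P. P \<in> \<P> \<Longrightarrow> integral\<^sup>L P f \<le> c"
  shows "integral\<^sup>L P f \<le> upE \<P> f"
  unfolding upE_def using assms by (intro cSUP_upper) (auto intro!: bdd_aboveI2[where M=c])

lemma upE_shift:
  assumes "\<P> \<noteq> {}" "\<And>P. P \<in> \<P> \<Longrightarrow> integral\<^sup>L P f = integral\<^sup>L P g + k"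
    "\<And>P. P \<in> \<P> \<Longrightarrow> integral\<^sup>L P g \<le> c"
  shows "upE \<P> f = upE \<P> g + k"
proof (rule antisym)
  show "upE \<P> f \<le> upE \<P> g + k"
  proof (rule upE_le[OF assms(1)])
    fix P assume P: "P \<in> \<P>"
    have "integral\<^sup>L P g \<le> upE \<P> g" using assms(3) P by (intro upE_ge) auto
    then show "integral\<^sup>L P f \<le> upE \<P> g + k" using assms(2)[OF P] by simp
  qed
  have "upE \<P> g \<le> upE \<P> f - k"
  proof (rule upE_le[OF assms(1)])
    fix P assume P: "P \<in> \<P>"
    have "integral\<^sup>L P f \<le> upE \<P> f"
    proof (rule upE_ge[where c="c+k", OF P])
      fix Q assume "Q \<in> \<P>" then show "integral\<^sup>L Q f \<le> c + k" using assms(2,3)[of Q] by simp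
    qed
    then show "integral\<^sup>L P g \<le> upE \<P> f - k" using assms(2)[OF P] by simp
  qed
  then show "upE \<P> g + k \<le> upE \<P> f" by simp
qed



context
  fixes \<P> :: "(real \<Rightarrow> real^'d) measure set" and sl sh :: real
  assumes fw: "G_framework \<P> sl sh"
begin

lemma ne: "\<P> \<noteq> {}" using fw unfolding G_framework_def by auto

lemma mom_int: "0 \<le> t \<Longrightarrow> P \<in> \<P> \<Longrightarrow> integrable P (\<lambda>w. norm (w t) ^ p)"
  using fw unfolding G_framework_def G_BM_def by auto

lemma mom_bdd: "0 \<le> t \<Longrightarrow> \<exists>B. \<forall>P\<in>\<P>. integral\<^sup>L P (\<lambda>w. norm (w t) ^ p) \<le> B"
proof -
  assume "0 \<le> t"
  then have "bdd_above ((\<lambda>P. integral\<^sup>L P (\<lambda>w. norm (w t) ^ p)) ` \<P>)"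
    using fw unfolding G_framework_def G_BM_def by auto
  then show ?thesis by (auto simp: bdd_above_def)
qed

lemma stat: "0 \<le> t \<Longrightarrow> 0 \<le> s \<Longrightarrow> lip_poly1 \<phi> \<Longrightarrow>
   upE \<P> (\<lambda>w. \<phi> (w (t + s) - w t)) = upE \<P> (\<lambda>w. \<phi> (w s))"
  using fw unfolding G_framework_def G_BM_def by auto

lemma indep: "0 \<le> t \<Longrightarrow> 0 \<le> s \<Longrightarrow> (\<forall>i<n. 0 \<le> ts i \<and> ts i \<le> t) \<Longrightarrow> lip_poly n \<phi> \<Longrightarrow>
        upE \<P> (\<lambda>w. \<phi> (cyl n ts w) (w (t + s) - w t)) =
        upE \<P> (\<lambda>w. upE \<P> (\<lambda>w'. \<phi> (cyl n ts w) (w' (t + s) - w' t)))"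
  using fw unfolding G_framework_def G_BM_def by blast

lemma mean_up: "0 \<le> t \<Longrightarrow> upE \<P> (\<lambda>w. a \<bullet> w t) = 0 \<and> upE \<P> (\<lambda>w. - (a \<bullet> w t)) = 0"
  using fw unfolding G_framework_def G_BM_def by blast

lemma coord: "P \<in> \<P> \<Longrightarrow> 0 \<le> s \<Longrightarrow> (\<lambda>w. w s) \<in> borel_measurable P"
  using meas_coord[OF fw] by blast

lemma prob: "P \<in> \<P> \<Longrightarrow> prob_space P" using fw_P[OF fw] by blast
lemma spc: "P \<in> \<P> \<Longrightarrow> space P = Omega" using fw_P[OF fw] by blast

lemma inner_int: "0 \<le> t \<Longrightarrow> P \<in> \<P> \<Longrightarrow> integrable P (\<lambda>w. a \<bullet> w t)"
proof -
  assume t: "0 \<le> t" and P: "P \<in> \<P>"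
  show ?thesis
  proof -
    have i1: "integrable P (\<lambda>w. norm a * norm (w t) ^ 1)" using mom_int[OF t P, of 1] by simp
    have m: "(\<lambda>w. a \<bullet> w t) \<in> borel_measurable P" using coord[OF P t] by measurable
    have ae: "AE w in P. norm (a \<bullet> w t) \<le> norm (norm a * norm (w t) ^ 1)"
      by (auto simp: Cauchy_Schwarz_ineq2)
    show ?thesis by (rule Bochner_Integration.integrable_bound[OF i1 m ae])
  qed
qed

lemma mean0: "0 \<le> t \<Longrightarrow> P \<in> \<P> \<Longrightarrow> integral\<^sup>L P (\<lambda>w. a \<bullet> w t) = 0"
proof -
  assume t: "0 \<le> t" and P: "P \<in> \<P>"
  obtain B where B: "\<And>Q. Q \<in> \<P> \<Longrightarrow> integral\<^sup>L Q (\<lambda>w. norm (w t) ^ 1) \<le> B"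
    using mom_bdd[OF t] by blast
  have bnd: "integral\<^sup>L Q (\<lambda>w. c \<bullet> w t) \<le> norm c * B" if Q: "Q \<in> \<P>" for Q c
  proof -
    have "integral\<^sup>L Q (\<lambda>w. c \<bullet> w t) \<le> integral\<^sup>L Q (\<lambda>w. norm c * norm (w t) ^ 1)"
      using inner_int[OF t Q] mom_int[OF t Q, of 1]
      by (intro integral_mono) (auto simp: Cauchy_Schwarz_ineq2 order.trans[OF abs_ge_self Cauchy_Schwarz_ineq2])
    also have "\<dots> = norm c * integral\<^sup>L Q (\<lambda>w. norm (w t) ^ 1)" by simp
    also have "\<dots> \<le> norm c * B" using B[OF Q] by (simp add: mult_left_mono)
    finally show ?thesis .
  qed
  have "integral\<^sup>L P (\<lambda>w. a \<bullet> w t) \<le> upE \<P> (\<lambda>w. a \<bullet> w t)"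
    by (rule upE_ge[OF P]) (rule bnd)
  then have 1: "integral\<^sup>L P (\<lambda>w. a \<bullet> w t) \<le> 0" using mean_up[OF t] by simp
  have "integral\<^sup>L P (\<lambda>w. (-a) \<bullet> w t) \<le> upE \<P> (\<lambda>w. (-a) \<bullet> w t)"
    by (rule upE_ge[OF P]) (rule bnd)
  then have 2: "integral\<^sup>L P (\<lambda>w. (-a) \<bullet> w t) \<le> 0" using mean_up[OF t, of a] by simp
  have "integral\<^sup>L P (\<lambda>w. (-a) \<bullet> w t) = - integral\<^sup>L P (\<lambda>w. a \<bullet> w t)" by simp
  with 1 2 show ?thesis by simp
qed

end


lemma abs_sq_diff: "\<bar>(norm u)\<^sup>2 - (norm v)\<^sup>2\<bar> \<le> norm (u - v) * (norm u + norm v)"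
proof -
  have e: "(norm u)\<^sup>2 - (norm v)\<^sup>2 = (norm u - norm v) * (norm u + norm v)"
    by (simp add: power2_eq_square algebra_simps)
  have "\<bar>(norm u)\<^sup>2 - (norm v)\<^sup>2\<bar> = \<bar>norm u - norm v\<bar> * (norm u + norm v)"
    unfolding e abs_mult by simp
  also have "\<dots> \<le> norm (u - v) * (norm u + norm v)"
    by (intro mult_right_mono norm_triangle_ineq3) auto
  finally show ?thesis .
qed

lemma lip1_sq: "lip_poly1 (\<lambda>y::'a::real_normed_vector. - (norm y)\<^sup>2)"
  unfolding lip_poly1_def
proof (intro exI allI)
  fix y y' :: 'a
  have "\<bar>- (norm y)\<^sup>2 - - (norm y')\<^sup>2\<bar> \<le> norm (y - y') * (norm y + norm y')"
    using abs_sq_diff[of y y'] by simp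
  also have "\<dots> \<le> 1 * (1 + norm y ^ 1 + norm y' ^ 1) * norm (y - y')" by (simp add: algebra_simps)
  finally show "\<bar>- (norm y)\<^sup>2 - - (norm y')\<^sup>2\<bar> \<le> 1 * (1 + norm y ^ 1 + norm y' ^ 1) * norm (y - y')" .
qed

lemma lin3:
  fixes f g h :: "'b \<Rightarrow> real"
  assumes "integrable M f" "integrable M g" "integrable M h" "prob_space M"
  shows "integral\<^sup>L M (\<lambda>x. - f x - (2 * g x - 2 * h x) - k) = - integral\<^sup>L M f - (2 * integral\<^sup>L M g - 2 * integral\<^sup>L M h) - k"
proof -
  have i: "integrable M (\<lambda>x. - f x - (2 * g x - 2 * h x))" using assms by auto
  have "integral\<^sup>L M (\<lambda>x. - f x - (2 * g x - 2 * h x) - k) = integral\<^sup>L M (\<lambda>x. - f x - (2 * g x - 2 * h x)) - integral\<^sup>L M (\<lambda>x. k)"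
    by (rule Bochner_Integration.integral_diff[OF i]) (use assms(4) in \<open>simp add: prob_space.finite_measure finite_measure.integrable_const\<close>)
  also have "integral\<^sup>L M (\<lambda>x. k) = k" using assms(4) by (simp add: prob_space.prob_space)
  also have "integral\<^sup>L M (\<lambda>x. - f x - (2 * g x - 2 * h x)) = integral\<^sup>L M (\<lambda>x. - f x) - integral\<^sup>L M (\<lambda>x. 2 * g x - 2 * h x)"
    by (rule Bochner_Integration.integral_diff) (use assms in auto)
  also have "integral\<^sup>L M (\<lambda>x. 2 * g x - 2 * h x) = integral\<^sup>L M (\<lambda>x. 2 * g x) - integral\<^sup>L M (\<lambda>x. 2 * h x)"
    by (rule Bochner_Integration.integral_diff) (use assms in auto)
  finally show ?thesis by simp
qed

lemma lin1:
  fixes f :: "'b \<Rightarrow> real"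
  assumes "integrable M f" "prob_space M"
  shows "integral\<^sup>L M (\<lambda>x. - f x + k) = integral\<^sup>L M (\<lambda>x. - f x) + k"
proof -
  have "integral\<^sup>L M (\<lambda>x. - f x + k) = integral\<^sup>L M (\<lambda>x. - f x) + integral\<^sup>L M (\<lambda>x. k)"
    by (rule Bochner_Integration.integral_add) (use assms in \<open>auto simp add: prob_space.finite_measure finite_measure.integrable_const\<close>)
  also have "integral\<^sup>L M (\<lambda>x. k) = k" using assms(2) by (simp add: prob_space.prob_space)
  finally show ?thesis .
qed

lemma nrm_nonneg: "0 \<le> nrm n x y" unfolding nrm_def by (intro add_nonneg_nonneg sum_nonneg) auto

lemma lip_sq: "lip_poly 1 (\<lambda>x (y::'a::real_normed_vector). - (norm (x 0 + y))\<^sup>2)"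
  unfolding lip_poly_def
proof (intro exI allI)
  fix x x' :: "nat \<Rightarrow> 'a" and y y' :: 'a
  have n: "nrm 1 x y = norm (x 0) + norm y" for x :: "nat \<Rightarrow> 'a" and y by (simp add: nrm_def)
  have "\<bar>- (norm (x 0 + y))\<^sup>2 - - (norm (x' 0 + y'))\<^sup>2\<bar> \<le> norm ((x 0 + y) - (x' 0 + y')) * (norm (x 0 + y) + norm (x' 0 + y'))"
    using abs_sq_diff[of "x 0 + y" "x' 0 + y'"] by simp
  also have "\<dots> \<le> nrm 1 (x - x') (y - y') * (nrm 1 x y + nrm 1 x' y')"
  proof (intro mult_mono add_mono)
    show "norm (x 0 + y - (x' 0 + y')) \<le> nrm 1 (x - x') (y - y')"
      unfolding n by (simp add: norm_triangle_ineq[of "x 0 - x' 0" "y - y'", simplified] algebra_simps)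
        (metis add_diff_add norm_triangle_ineq)
    show "0 \<le> nrm 1 (x - x') (y - y')" by (rule nrm_nonneg)
  qed (use nrm_nonneg[of "Suc 0" "x - x'" "y - y'"] in \<open>auto simp: nrm_def norm_triangle_ineq\<close>)
  also have "\<dots> = (nrm 1 x y + nrm 1 x' y') * nrm 1 (x - x') (y - y')" by (simp add: mult.commute)
  also have "\<dots> \<le> 1 * (1 + nrm 1 x y ^ 1 + nrm 1 x' y' ^ 1) * nrm 1 (x - x') (y - y')"
    by (rule mult_right_mono[OF _ nrm_nonneg]) simp
  finally show "\<bar>- (norm (x 0 + y))\<^sup>2 - - (norm (x' 0 + y'))\<^sup>2\<bar> \<le> 1 * (1 + nrm 1 x y ^ 1 + nrm 1 x' y' ^ 1) * nrm 1 (x - x') (y - y')" .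
qed

lemma neg_mat1: "(- mat 1 :: real^'n^'n) *v v = - v"
proof -
  have "(- mat 1 :: real^'n^'n) *v v = - (mat 1 *v v)"
    unfolding vec_eq_iff by (simp add: matrix_vector_mult_def sum_negf)
  then show ?thesis by simp
qed
lemma neg_mat2: "transpose (- mat 1 :: real^'n^'n) = - mat 1"
  by (simp add: transpose_def vec_eq_iff mat_def)
lemma neg_mat3: "trace (- mat 1 :: real^'n^'n) = - real CARD('n)"
proof -
  have "trace (- mat 1 :: real^'n^'n) = - trace (mat 1 :: real^'n^'n)"
    unfolding trace_def by (simp add: sum_negf)
  then show ?thesis by (simp add: trace_I)
qed



context
  fixes \<P> :: "(real \<Rightarrow> real^'d) measure set" and sl sh :: real
  assumes fw: "G_framework \<P> sl sh"
begin

lemma sq_int: "0 \<le> t \<Longrightarrow> P \<in> \<P> \<Longrightarrow> integrable P (\<lambda>w. (norm (w t))\<^sup>2)"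
  using mom_int[OF fw, of t P 2] by simp

lemma dsq_int:
  assumes t: "0 \<le> t" and s: "0 \<le> s" and P: "P \<in> \<P>"
  shows "integrable P (\<lambda>w. (norm (w s - w t))\<^sup>2)"
proof -
  have i1: "integrable P (\<lambda>w. 2 * (norm (w s))\<^sup>2 + 2 * (norm (w t))\<^sup>2)"
    using sq_int[OF s P] sq_int[OF t P] by simp
  have m: "(\<lambda>w. (norm (w s - w t))\<^sup>2) \<in> borel_measurable P"
    using coord[OF fw P s] coord[OF fw P t] by measurable
  have ae: "AE w in P. norm ((norm (w s - w t))\<^sup>2) \<le> norm (2 * (norm (w s))\<^sup>2 + 2 * (norm (w t))\<^sup>2)"
  proof (intro AE_I2)
    fix w
    have "norm (w s - w t) \<le> norm (w s) + norm (w t)" by (rule norm_triangle_ineq4)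
    then have "(norm (w s - w t))\<^sup>2 \<le> (norm (w s) + norm (w t))\<^sup>2" by (intro power_mono) auto
    also have "\<dots> \<le> 2 * (norm (w s))\<^sup>2 + 2 * (norm (w t))\<^sup>2"
      by (smt (verit) sum_squares_bound power2_sum)
    finally show "norm ((norm (w s - w t))\<^sup>2) \<le> norm (2 * (norm (w s))\<^sup>2 + 2 * (norm (w t))\<^sup>2)" by simp
  qed
  show ?thesis by (rule Bochner_Integration.integrable_bound[OF i1 m ae])
qed

definition "uu t = upE \<P> (\<lambda>w::real \<Rightarrow> real^'d. - (norm (w t))\<^sup>2)"

lemma uu_step:
  assumes t: "0 \<le> t"
  shows "uu (t + 1) = uu t + uu 1"
proof -
  define \<phi> where "\<phi> = (\<lambda>(x::nat \<Rightarrow> real^'d) y. - (norm (x 0 + y))\<^sup>2)"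
  define ts where "ts = (\<lambda>i::nat. t)"
  have "uu (t + 1) = upE \<P> (\<lambda>w. \<phi> (cyl 1 ts w) (w (t + 1) - w t))"
    unfolding uu_def \<phi>_def ts_def cyl_def by simp
  also have "\<dots> = upE \<P> (\<lambda>w. upE \<P> (\<lambda>w'. \<phi> (cyl 1 ts w) (w' (t + 1) - w' t)))"
    using t lip_sq unfolding \<phi>_def ts_def by (intro indep[OF fw]) auto
  also have "\<dots> = upE \<P> (\<lambda>w. - (norm (w t))\<^sup>2 + uu 1)"
  proof -
    have "upE \<P> (\<lambda>w'. \<phi> (cyl 1 ts w) (w' (t + 1) - w' t)) = - (norm (w t))\<^sup>2 + uu 1" for w
    proof -
      define c where "c = w t"
      have "upE \<P> (\<lambda>w'. \<phi> (cyl 1 ts w) (w' (t + 1) - w' t))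
          = upE \<P> (\<lambda>w'. - (norm (c + (w' (t + 1) - w' t)))\<^sup>2)"
        unfolding \<phi>_def ts_def cyl_def c_def by simp
      also have "\<dots> = upE \<P> (\<lambda>w'. - (norm (w' (t + 1) - w' t))\<^sup>2) + - (norm c)\<^sup>2"
      proof (rule upE_shift[OF ne[OF fw]])
        fix P assume P: "P \<in> \<P>"
        have e: "- (norm (c + (w' (t + 1) - w' t)))\<^sup>2 =
            - (norm (w' (t + 1) - w' t))\<^sup>2 - (2 * (c \<bullet> w' (t + 1)) - 2 * (c \<bullet> w' t)) - (norm c)\<^sup>2" for w'
          by (simp add: power2_norm_eq_inner inner_add inner_diff algebra_simps inner_commute)
        have t1: "0 \<le> t + 1" using t by simp
        have "integral\<^sup>L P (\<lambda>w'. - (norm (c + (w' (t + 1) - w' t)))\<^sup>2) =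
            integral\<^sup>L P (\<lambda>w'. - (norm (w' (t + 1) - w' t))\<^sup>2 - (2 * (c \<bullet> w' (t + 1)) - 2 * (c \<bullet> w' t)) - (norm c)\<^sup>2)"
          unfolding e ..
        also have "\<dots> = integral\<^sup>L P (\<lambda>w'. - (norm (w' (t + 1) - w' t))\<^sup>2) - (2 * integral\<^sup>L P (\<lambda>w'. c \<bullet> w' (t + 1)) - 2 * integral\<^sup>L P (\<lambda>w'. c \<bullet> w' t)) - (norm c)\<^sup>2"
          using lin3[OF dsq_int[OF t t1 P] inner_int[OF fw t1 P, of c] inner_int[OF fw t P, of c] prob[OF fw P]]
          by simp
        also have "\<dots> = integral\<^sup>L P (\<lambda>w'. - (norm (w' (t + 1) - w' t))\<^sup>2) + - (norm c)\<^sup>2"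
          using mean0[OF fw t1 P, of c] mean0[OF fw t P, of c] by simp
        finally show "integral\<^sup>L P (\<lambda>w'. - (norm (c + (w' (t + 1) - w' t)))\<^sup>2) =
            integral\<^sup>L P (\<lambda>w'. - (norm (w' (t + 1) - w' t))\<^sup>2) + - (norm c)\<^sup>2" .
      next
        fix P assume P: "P \<in> \<P>"
        show "integral\<^sup>L P (\<lambda>w'. - (norm (w' (t + 1) - w' t))\<^sup>2) \<le> 0"
          by (simp add: integral_nonneg_AE)
      qed
      also have "upE \<P> (\<lambda>w'. - (norm (w' (t + 1) - w' t))\<^sup>2) = uu 1"
        unfolding uu_def using stat[OF fw t _ lip1_sq, of 1] by simp
      finally show ?thesis unfolding c_def by simp
    qed
    then show ?thesis by simp
  qed
  also have "\<dots> = uu t + uu 1"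
    unfolding uu_def
  proof (rule upE_shift[OF ne[OF fw]])
    fix P assume P: "P \<in> \<P>"
    show "integral\<^sup>L P (\<lambda>w. - (norm (w t))\<^sup>2 + upE \<P> (\<lambda>w. - (norm (w 1))\<^sup>2)) =
        integral\<^sup>L P (\<lambda>w. - (norm (w t))\<^sup>2) + upE \<P> (\<lambda>w. - (norm (w 1))\<^sup>2)"
      by (rule lin1[OF sq_int[OF t P] prob[OF fw P]])
  next
    fix P assume P: "P \<in> \<P>"
    show "integral\<^sup>L P (\<lambda>w. - (norm (w t))\<^sup>2) \<le> 0"
      by (simp add: integral_nonneg_AE)
  qed
  finally show ?thesis .
qed

end


context
  fixes \<P> :: "(real \<Rightarrow> real^'d) measure set" and sl sh :: real
  assumes fw: "G_framework \<P> sl sh"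
begin

lemma uu0: "uu \<P> 0 = 0"
proof -
  have "uu \<P> 0 = upE \<P> (\<lambda>w. 0) + 0"
    unfolding uu_def[OF fw]
  proof (rule upE_shift[OF ne[OF fw]])
    fix P assume P: "P \<in> \<P>"
    have "integral\<^sup>L P (\<lambda>w::real \<Rightarrow> real^'d. - (norm (w 0))\<^sup>2) = integral\<^sup>L P (\<lambda>w. 0)"
      by (rule Bochner_Integration.integral_cong) (auto simp: spc[OF fw P] Omega_def)
    then show "integral\<^sup>L P (\<lambda>w::real \<Rightarrow> real^'d. - (norm (w 0))\<^sup>2) = integral\<^sup>L P (\<lambda>w. 0) + 0" by simp
  qed auto
  also have "upE \<P> (\<lambda>w. 0) = 0" unfolding upE_def using ne[OF fw] by simp
  finally show ?thesis by simp
qed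

lemma uu1: "uu \<P> 1 = - sl\<^sup>2 * real CARD('d)"
proof -
  have cA: "condA \<P> sl sh" using fw unfolding G_framework_def by auto
  then have "Gfun \<P> (- mat 1) = G' sl sh (trace (- mat 1 :: real^'d^'d))"
    unfolding condA_def using neg_mat2 by blast
  moreover have "Gfun \<P> (- mat 1) = uu \<P> 1 / 2"
    unfolding Gfun_def uu_def[OF fw] neg_mat1 by (simp add: power2_norm_eq_inner)
  moreover have "G' sl sh (trace (- mat 1 :: real^'d^'d)) = - sl\<^sup>2 * real CARD('d) / 2"
    unfolding neg_mat3 G'_def by simp
  ultimately show ?thesis by simp
qed

lemma uun: "uu \<P> (real n) = real n * uu \<P> 1"
proof (induction n)
  case 0 then show ?case using uu0 by simp
next
  case (Suc n)
  have "uu \<P> (real (Suc n)) = uu \<P> (real n + 1)" by (simp add: add.commute)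
  also have "\<dots> = uu \<P> (real n) + uu \<P> 1" by (rule uu_step[OF fw]) simp
  finally show ?case using Suc by (simp add: algebra_simps)
qed

lemma var_lb:
  assumes P: "P \<in> \<P>"
  shows "real n * (sl\<^sup>2 * real CARD('d)) \<le> integral\<^sup>L P (\<lambda>w. (norm (w (real n)))\<^sup>2)"
proof -
  have "integral\<^sup>L P (\<lambda>w. - (norm (w (real n)))\<^sup>2) \<le> uu \<P> (real n)"
    unfolding uu_def[OF fw] by (rule upE_ge[OF P, where c=0]) (simp add: integral_nonneg_AE)
  then show ?thesis unfolding uun uu1 by (simp add: integral_minus)
qed

end


definition gb :: "'a::real_normed_vector \<Rightarrow> real \<Rightarrow> 'a \<Rightarrow> real" where
  "gb x R v = min 1 (max 0 (R - norm (v + x)))"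

lemma gb_ge0: "0 \<le> gb x R v" and gb_le1: "gb x R v \<le> 1"
  unfolding gb_def by auto

lemma gb_lip: "\<bar>gb x R v - gb x R v'\<bar> \<le> norm (v - v')"
proof -
  have "\<bar>norm (v + x) - norm (v' + x)\<bar> \<le> norm ((v + x) - (v' + x))" by (rule norm_triangle_ineq3)
  then have "\<bar>norm (v + x) - norm (v' + x)\<bar> \<le> norm (v - v')" by simp
  then show ?thesis unfolding gb_def by (simp add: abs_le_iff) linarith
qed

lemma gb_one: "norm (v + x) \<le> R - 1 \<Longrightarrow> gb x R v = 1"
  unfolding gb_def by simp

lemma gb_zero: "R \<le> norm (v + x) \<Longrightarrow> gb x R v = 0"
  unfolding gb_def by simp

lemma lip1_gb: "lip_poly1 (\<lambda>v. gb x R (c + v))"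
  unfolding lip_poly1_def
proof (intro exI allI)
  fix y y' :: 'a
  have "\<bar>gb x R (c + y) - gb x R (c + y')\<bar> \<le> norm (y - y')"
    using gb_lip[of x R "c + y" "c + y'"] by simp
  also have "\<dots> \<le> 1 * (1 + norm y ^ 0 + norm y' ^ 0) * norm (y - y')" by simp
  finally show "\<bar>gb x R (c + y) - gb x R (c + y')\<bar> \<le> 1 * (1 + norm y ^ 0 + norm y' ^ 0) * norm (y - y')" .
qed

lemma prod_diff:
  fixes a b :: "nat \<Rightarrow> real"
  assumes "\<And>k. k < m \<Longrightarrow> 0 \<le> a k \<and> a k \<le> 1 \<and> 0 \<le> b k \<and> b k \<le> 1"
  shows "\<bar>(\<Prod>k<m. a k) - (\<Prod>k<m. b k)\<bar> \<le> (\<Sum>k<m. \<bar>a k - b k\<bar>)"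
  using assms
proof (induction m)
  case 0 then show ?case by simp
next
  case (Suc m)
  let ?A = "\<Prod>k<m. a k" and ?B = "\<Prod>k<m. b k"
  have A: "0 \<le> ?A" "?A \<le> 1" using Suc.prems by (auto intro!: prod_nonneg prod_le_1)
  have B: "0 \<le> ?B" "?B \<le> 1" using Suc.prems by (auto intro!: prod_nonneg prod_le_1)
  have am: "0 \<le> a m" "a m \<le> 1" "0 \<le> b m" "b m \<le> 1" using Suc.prems by auto
  have IH: "\<bar>?A - ?B\<bar> \<le> (\<Sum>k<m. \<bar>a k - b k\<bar>)" using Suc by auto
  have "\<bar>?A * a m - ?B * b m\<bar> = \<bar>(?A - ?B) * a m + ?B * (a m - b m)\<bar>" by (simp add: algebra_simps)
  also have "\<dots> \<le> \<bar>?A - ?B\<bar> * \<bar>a m\<bar> + \<bar>?B\<bar> * \<bar>a m - b m\<bar>" by (simp add: abs_mult[symmetric] abs_triangle_ineq)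
  also have "\<dots> \<le> \<bar>?A - ?B\<bar> + \<bar>a m - b m\<bar>"
    using A B am by (intro add_mono mult_left_le mult_left_le_one_le) (auto intro: mult_left_le_one_le)
  also have "\<dots> \<le> (\<Sum>k<m. \<bar>a k - b k\<bar>) + \<bar>a m - b m\<bar>" using IH by simp
  finally show ?case by simp
qed

definition phiS :: "'a::real_normed_vector \<Rightarrow> real \<Rightarrow> nat \<Rightarrow> (nat \<Rightarrow> 'a) \<Rightarrow> 'a \<Rightarrow> real" where
  "phiS x R m xx y = (\<Prod>k<m. gb x R (xx (Suc k))) * gb x R (xx m + y)"

lemma lip_phiS: "lip_poly (Suc m) (phiS x R m)"
  unfolding lip_poly_def
proof (intro exI allI)
  fix xx xx' :: "nat \<Rightarrow> 'a" and y y' :: 'a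
  let ?S = "\<Sum>i<Suc m. norm (xx i - xx' i)"
  have nr: "nrm (Suc m) (xx - xx') (y - y') = ?S + norm (y - y')" by (simp add: nrm_def)
  have S0: "0 \<le> ?S" by (intro sum_nonneg norm_ge_zero)
  have "\<bar>phiS x R m xx y - phiS x R m xx' y'\<bar> \<le> (\<Sum>k<Suc m. \<bar>(\<lambda>k. if k < m then gb x R (xx (Suc k)) else gb x R (xx m + y)) k - (\<lambda>k. if k < m then gb x R (xx' (Suc k)) else gb x R (xx' m + y')) k\<bar>)"
    unfolding phiS_def using prod_diff[of "Suc m" "\<lambda>k. if k < m then gb x R (xx (Suc k)) else gb x R (xx m + y)"
      "\<lambda>k. if k < m then gb x R (xx' (Suc k)) else gb x R (xx' m + y')"]
    by (simp add: gb_ge0 gb_le1)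
  also have "\<dots> = (\<Sum>k<m. \<bar>gb x R (xx (Suc k)) - gb x R (xx' (Suc k))\<bar>) + \<bar>gb x R (xx m + y) - gb x R (xx' m + y')\<bar>"
    by simp
  also have "\<dots> \<le> (\<Sum>k<m. norm (xx (Suc k) - xx' (Suc k))) + norm ((xx m + y) - (xx' m + y'))"
    by (intro add_mono sum_mono gb_lip)
  finally have h1: "\<bar>phiS x R m xx y - phiS x R m xx' y'\<bar> \<le> (\<Sum>k<m. norm (xx (Suc k) - xx' (Suc k))) + norm ((xx m + y) - (xx' m + y'))" .
  have h2: "(\<Sum>k<m. norm (xx (Suc k) - xx' (Suc k))) \<le> ?S"
  proof -
    have "(\<Sum>k<m. norm (xx (Suc k) - xx' (Suc k))) = (\<Sum>i\<in>Suc ` {..<m}. norm (xx i - xx' i))"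
      by (simp add: sum.reindex)
    also have "\<dots> \<le> ?S" by (rule sum_mono2) auto
    finally show ?thesis .
  qed
  have h3: "norm ((xx m + y) - (xx' m + y')) \<le> ?S + norm (y - y')"
  proof -
    have "norm ((xx m + y) - (xx' m + y')) \<le> norm (xx m - xx' m) + norm (y - y')"
      by (metis add_diff_add norm_triangle_ineq)
    moreover have "norm (xx m - xx' m) \<le> ?S"
      by (rule member_le_sum[where f="\<lambda>i. norm (xx i - xx' i)"]) auto
    ultimately show ?thesis by simp
  qed
  have h4: "?S + (?S + norm (y - y')) \<le> 2 * (1 + nrm (Suc m) xx y ^ 0 + nrm (Suc m) xx' y' ^ 0) * nrm (Suc m) (xx - xx') (y - y')"
    unfolding nr using S0 by simp
  from h1 h2 h3 h4 show "\<bar>phiS x R m xx y - phiS x R m xx' y'\<bar> \<le> 2 * (1 + nrm (Suc m) xx y ^ 0 + nrm (Suc m) xx' y' ^ 0) * nrm (Suc m) (xx - xx') (y - y')" by linarith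
qed



lemma arith_q:
  fixes a V R M4 E2 E4 :: real
  assumes a: "0 \<le> a" and V: "0 < V" and R: "2 * R\<^sup>2 \<le> V" and M4: "0 \<le> M4"
    and E2: "V \<le> E2" and E4: "E4 \<le> M4"
  shows "1 - 2 * ((V / (16 * (M4 + V + 1))) / (a + (M4 + V + 1))) * (a + E2 - R\<^sup>2)
         + 8 * ((V / (16 * (M4 + V + 1))) / (a + (M4 + V + 1)))\<^sup>2 * (a\<^sup>2 + E4)
         \<le> 1 - V\<^sup>2 / (32 * (M4 + V + 1)\<^sup>2)"
proof -
  define \<mu> where "\<mu> = M4 + V + 1"
  define l where "l = V / (16 * \<mu>)"
  define e where "e = l / (a + \<mu>)"
  have mu: "0 < \<mu>" "V \<le> \<mu>" "M4 \<le> \<mu>" "1 \<le> \<mu>" using M4 V unfolding \<mu>_def by auto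
  have l0: "0 \<le> l" using mu V unfolding l_def by auto
  have am: "0 < a + \<mu>" using a mu by auto
  have e0: "0 \<le> e" using l0 am unfolding e_def by auto
  have R2: "a + V / 2 \<le> a + E2 - R\<^sup>2" using R E2 by simp
  have h1: "2 * e * (a + V / 2) \<le> 2 * e * (a + E2 - R\<^sup>2)"
    using R2 e0 by (intro mult_left_mono) auto
  have av: "a * V \<le> a * \<mu>" using mult_left_mono[OF mu(2) a] .
  have a0: "0 \<le> a * \<mu>" using a mu by simp
  have "V * (a + \<mu>) = a * V + V * \<mu>" by (simp add: algebra_simps)
  also have "\<dots> \<le> a * \<mu> + V * \<mu>" using av by (rule add_right_mono)
  also have "\<dots> \<le> 2 * (a * \<mu>) + V * \<mu>" using a0 by linarith
  also have "\<dots> = (a + V / 2) * (2 * \<mu>)" by (simp add: algebra_simps)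
  finally have cr: "0 \<le> (a + V / 2) * (2 * \<mu>) - V * (a + \<mu>)" by simp
  have eq: "2 * e * (a + V / 2) - l * V / \<mu> = l * ((a + V / 2) * (2 * \<mu>) - V * (a + \<mu>)) / (\<mu> * (a + \<mu>))"
    unfolding e_def using mu am by (simp add: field_simps)
  have "0 \<le> l * ((a + V / 2) * (2 * \<mu>) - V * (a + \<mu>)) / (\<mu> * (a + \<mu>))"
    using l0 cr mu am by (intro divide_nonneg_nonneg mult_nonneg_nonneg) auto
  then have h2: "l * V / \<mu> \<le> 2 * e * (a + V / 2)" using eq by linarith
  have sq: "a\<^sup>2 + E4 \<le> (a + \<mu>)\<^sup>2"
  proof -
    have "\<mu> * 1 \<le> \<mu> * \<mu>" using mu by (intro mult_left_mono) auto
    then have mm: "\<mu> \<le> \<mu> * \<mu>" by simp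
    have m2: "M4 \<le> \<mu>\<^sup>2" unfolding power2_eq_square using mm mu(3) by linarith
    have "0 \<le> 2 * a * \<mu>" using a mu by simp
    moreover have "(a + \<mu>)\<^sup>2 = a\<^sup>2 + 2 * a * \<mu> + \<mu>\<^sup>2" by (simp add: power2_eq_square algebra_simps)
    ultimately show ?thesis using E4 m2 by linarith
  qed
  have h3: "8 * e\<^sup>2 * (a\<^sup>2 + E4) \<le> 8 * l\<^sup>2"
  proof -
    have "e\<^sup>2 * (a\<^sup>2 + E4) = l\<^sup>2 * ((a\<^sup>2 + E4) / (a + \<mu>)\<^sup>2)"
      unfolding e_def by (simp add: power_divide)
    also have "\<dots> \<le> l\<^sup>2 * 1"
    proof (rule mult_left_mono)
      have "0 < (a + \<mu>)\<^sup>2" using am by simp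
      then show "(a\<^sup>2 + E4) / (a + \<mu>)\<^sup>2 \<le> 1" using sq by (simp add: divide_le_eq)
    qed simp
    finally show ?thesis by simp
  qed
  have h4: "1 - l * V / \<mu> + 8 * l\<^sup>2 = 1 - V\<^sup>2 / (32 * \<mu>\<^sup>2)"
    unfolding l_def using mu(1) by (simp add: field_simps power2_eq_square)
  have "1 - 2 * e * (a + E2 - R\<^sup>2) + 8 * e\<^sup>2 * (a\<^sup>2 + E4) \<le> 1 - V\<^sup>2 / (32 * \<mu>\<^sup>2)"
    using h1 h2 h3 h4 by linarith
  then show ?thesis unfolding e_def l_def \<mu>_def .
qed

lemma lin4:
  fixes f g h :: "'b \<Rightarrow> real"
  assumes i: "integrable M f" "integrable M g" "integrable M h" and M: "prob_space M"
  shows "integral\<^sup>L M (\<lambda>w. K0 + K1 * f w + K2 * g w + K3 * h w) = K0 + K1 * integral\<^sup>L M f + K2 * integral\<^sup>L M g + K3 * integral\<^sup>L M h"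
proof -
  have ic: "integrable M (\<lambda>w. K0)" using M by (simp add: prob_space.finite_measure finite_measure.integrable_const)
  have "integral\<^sup>L M (\<lambda>w. K0 + K1 * f w + K2 * g w + K3 * h w) = integral\<^sup>L M (\<lambda>w. K0 + K1 * f w + K2 * g w) + integral\<^sup>L M (\<lambda>w. K3 * h w)"
    by (rule Bochner_Integration.integral_add) (use i ic in auto)
  also have "integral\<^sup>L M (\<lambda>w. K0 + K1 * f w + K2 * g w) = integral\<^sup>L M (\<lambda>w. K0 + K1 * f w) + integral\<^sup>L M (\<lambda>w. K2 * g w)"
    by (rule Bochner_Integration.integral_add) (use i ic in auto)
  also have "integral\<^sup>L M (\<lambda>w. K0 + K1 * f w) = integral\<^sup>L M (\<lambda>w. K0) + integral\<^sup>L M (\<lambda>w. K1 * f w)"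
    by (rule Bochner_Integration.integral_add) (use i ic in auto)
  also have "integral\<^sup>L M (\<lambda>w. K0) = K0" using M by (simp add: prob_space.prob_space)
  finally show ?thesis by simp
qed

lemma sq_expand: "(norm (z + X))\<^sup>2 = (norm z)\<^sup>2 + 2 * (z \<bullet> X) + (norm X)\<^sup>2"
  for z X :: "'a::real_inner"
  by (simp add: power2_norm_eq_inner inner_add inner_commute algebra_simps)

lemma sq2: "(p + q)\<^sup>2 \<le> 2 * (p\<^sup>2 + q\<^sup>2)" for p q :: real
proof -
  have "(p + q)\<^sup>2 + (p - q)\<^sup>2 = 2 * (p\<^sup>2 + q\<^sup>2)" by (simp add: power2_eq_square algebra_simps)
  moreover have "0 \<le> (p - q)\<^sup>2" by simp
  ultimately show ?thesis by linarith
qed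

lemma pw:
  fixes z X :: "'a::real_inner" and e R :: real
  assumes e: "0 \<le> e"
  shows "min 1 (max 0 (R - norm (z + X))) \<le> 1 - 2 * e * ((norm z)\<^sup>2 + 2 * (z \<bullet> X) + (norm X)\<^sup>2 - R\<^sup>2) + 8 * e\<^sup>2 * (((norm z)\<^sup>2)\<^sup>2 + norm X ^ 4)"
proof -
  define s where "s = (norm (z + X))\<^sup>2"
  have s_eq: "s = (norm z)\<^sup>2 + 2 * (z \<bullet> X) + (norm X)\<^sup>2" unfolding s_def by (rule sq_expand)
  have s0: "0 \<le> s" unfolding s_def by simp
  have "norm (z + X) \<le> norm z + norm X" by (rule norm_triangle_ineq)
  then have "s \<le> (norm z + norm X)\<^sup>2" unfolding s_def by (intro power_mono) auto
  also have "\<dots> \<le> 2 * ((norm z)\<^sup>2 + (norm X)\<^sup>2)"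
    by (rule sq2)
  finally have s1: "s \<le> 2 * ((norm z)\<^sup>2 + (norm X)\<^sup>2)" .
  have "s\<^sup>2 \<le> (2 * ((norm z)\<^sup>2 + (norm X)\<^sup>2))\<^sup>2" using s0 s1 by (intro power_mono) auto
  also have "\<dots> = 4 * ((norm z)\<^sup>2 + (norm X)\<^sup>2)\<^sup>2" by (simp only: power_mult_distrib) simp
  also have "\<dots> \<le> 4 * (2 * (((norm z)\<^sup>2)\<^sup>2 + ((norm X)\<^sup>2)\<^sup>2))"
    by (intro mult_left_mono sq2) simp
  also have "((norm X)\<^sup>2)\<^sup>2 = norm X ^ 4" by simp
  finally have s2: "s\<^sup>2 \<le> 8 * (((norm z)\<^sup>2)\<^sup>2 + norm X ^ 4)" by simp
  have low: "1 - 2 * e * (s - R\<^sup>2) + e\<^sup>2 * s\<^sup>2 \<le> 1 - 2 * e * ((norm z)\<^sup>2 + 2 * (z \<bullet> X) + (norm X)\<^sup>2 - R\<^sup>2) + 8 * e\<^sup>2 * (((norm z)\<^sup>2)\<^sup>2 + norm X ^ 4)"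
  proof -
    have "e\<^sup>2 * s\<^sup>2 \<le> e\<^sup>2 * (8 * (((norm z)\<^sup>2)\<^sup>2 + norm X ^ 4))" using s2 by (intro mult_left_mono) auto
    then show ?thesis unfolding s_eq by (simp add: algebra_simps)
  qed
  show ?thesis
  proof (cases "norm (z + X) < R")
    case True
    then have "s < R\<^sup>2" unfolding s_def by (intro power_strict_mono) auto
    then have "0 \<le> - 2 * e * (s - R\<^sup>2)" using e by (simp add: mult_nonneg_nonpos)
    moreover have "0 \<le> e\<^sup>2 * s\<^sup>2" by simp
    moreover have "min 1 (max 0 (R - norm (z + X))) \<le> 1" by simp
    ultimately show ?thesis using low by linarith
  next
    case False
    then have "min 1 (max 0 (R - norm (z + X))) = 0" by simp
    moreover have "1 - 2 * e * (s - R\<^sup>2) + e\<^sup>2 * s\<^sup>2 = (1 - e * s)\<^sup>2 + 2 * e * R\<^sup>2"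
      by (simp add: power2_eq_square algebra_simps)
    moreover have "0 \<le> (1 - e * s)\<^sup>2 + 2 * e * R\<^sup>2" using e by simp
    ultimately show ?thesis using low by linarith
  qed
qed



lemma anti:
  fixes X :: "'b \<Rightarrow> 'a::euclidean_space"
  assumes M: "prob_space M" and Xm: "X \<in> borel_measurable M"
   and i2: "integrable M (\<lambda>w. (norm (X w))\<^sup>2)" and i4: "integrable M (\<lambda>w. norm (X w) ^ 4)"
   and ia: "integrable M (\<lambda>w. (c + x) \<bullet> X w)" and ma: "integral\<^sup>L M (\<lambda>w. (c + x) \<bullet> X w) = 0"
   and V0: "0 < V" and R: "2 * R\<^sup>2 \<le> V" and M40: "0 \<le> M4"
   and E2: "V \<le> integral\<^sup>L M (\<lambda>w. (norm (X w))\<^sup>2)" and E4: "integral\<^sup>L M (\<lambda>w. norm (X w) ^ 4) \<le> M4"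
  shows "integral\<^sup>L M (\<lambda>w. gb x R (c + X w)) \<le> 1 - V\<^sup>2 / (32 * (M4 + V + 1)\<^sup>2)"
proof -
  define z where "z = c + x"
  define a where "a = (norm z)\<^sup>2"
  define e where "e = (V / (16 * (M4 + V + 1))) / (a + (M4 + V + 1))"
  have a0: "0 \<le> a" unfolding a_def by simp
  have e0: "0 \<le> e" unfolding e_def using a0 V0 M40 by (intro divide_nonneg_pos) auto
  define K0 where "K0 = 1 - 2 * e * (a - R\<^sup>2) + 8 * e\<^sup>2 * a\<^sup>2"
  define K1 where "K1 = - 4 * e"
  define K2 where "K2 = - 2 * e"
  define K3 where "K3 = 8 * e\<^sup>2"
  have fin: "finite_measure M" using M by (simp add: prob_space.finite_measure)
  have gi: "integrable M (\<lambda>w. gb x R (c + X w))"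
  proof (rule finite_measure.integrable_const_bound[OF fin, where B=1])
    show "AE w in M. norm (gb x R (c + X w)) \<le> 1" by (intro AE_I2) (metis gb_ge0 gb_le1 abs_of_nonneg real_norm_def)
    show "(\<lambda>w. gb x R (c + X w)) \<in> borel_measurable M" unfolding gb_def using Xm by measurable
  qed
  have hi: "integrable M (\<lambda>w. K0 + K1 * (z \<bullet> X w) + K2 * (norm (X w))\<^sup>2 + K3 * norm (X w) ^ 4)"
    using ia i2 i4 M unfolding z_def by (auto simp: prob_space.finite_measure finite_measure.integrable_const)
  have "integral\<^sup>L M (\<lambda>w. gb x R (c + X w)) \<le> integral\<^sup>L M (\<lambda>w. K0 + K1 * (z \<bullet> X w) + K2 * (norm (X w))\<^sup>2 + K3 * norm (X w) ^ 4)"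
  proof (rule integral_mono[OF gi hi])
    fix w
    have "gb x R (c + X w) = min 1 (max 0 (R - norm (z + X w)))" unfolding gb_def z_def by (simp add: algebra_simps)
    also have "\<dots> \<le> 1 - 2 * e * ((norm z)\<^sup>2 + 2 * (z \<bullet> X w) + (norm (X w))\<^sup>2 - R\<^sup>2) + 8 * e\<^sup>2 * (((norm z)\<^sup>2)\<^sup>2 + norm (X w) ^ 4)"
      by (rule pw[OF e0])
    also have "\<dots> = K0 + K1 * (z \<bullet> X w) + K2 * (norm (X w))\<^sup>2 + K3 * norm (X w) ^ 4"
      unfolding K0_def K1_def K2_def K3_def a_def by (simp add: algebra_simps)
    finally show "gb x R (c + X w) \<le> K0 + K1 * (z \<bullet> X w) + K2 * (norm (X w))\<^sup>2 + K3 * norm (X w) ^ 4" .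
  qed
  also have "\<dots> = K0 + K1 * integral\<^sup>L M (\<lambda>w. z \<bullet> X w) + K2 * integral\<^sup>L M (\<lambda>w. (norm (X w))\<^sup>2) + K3 * integral\<^sup>L M (\<lambda>w. norm (X w) ^ 4)"
    by (rule lin4[OF _ i2 i4 M]) (use ia in \<open>simp add: z_def\<close>)
  also have "\<dots> = 1 - 2 * e * (a + integral\<^sup>L M (\<lambda>w. (norm (X w))\<^sup>2) - R\<^sup>2) + 8 * e\<^sup>2 * (a\<^sup>2 + integral\<^sup>L M (\<lambda>w. norm (X w) ^ 4))"
    using ma unfolding K0_def K1_def K2_def K3_def z_def by (simp add: algebra_simps)
  also have "\<dots> \<le> 1 - V\<^sup>2 / (32 * (M4 + V + 1)\<^sup>2)"
    unfolding e_def by (rule arith_q[OF a0 V0 R M40 E2 E4])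
  finally show ?thesis .
qed



definition Phi :: "real^'d \<Rightarrow> real \<Rightarrow> real \<Rightarrow> nat \<Rightarrow> (real \<Rightarrow> real^'d) \<Rightarrow> real" where
  "Phi x R T m w = (\<Prod>k<m. gb x R (w (real (Suc k) * T)))"

lemma Phi_ge0: "0 \<le> Phi x R T m w" unfolding Phi_def by (intro prod_nonneg) (auto simp: gb_ge0)
lemma Phi_le1: "Phi x R T m w \<le> 1" unfolding Phi_def by (intro prod_le_1) (auto simp: gb_ge0 gb_le1)

context
  fixes \<P> :: "(real \<Rightarrow> real^'d) measure set" and sl sh :: real
  assumes fw: "G_framework \<P> sl sh"
begin

lemma gb_meas: "P \<in> \<P> \<Longrightarrow> 0 \<le> s \<Longrightarrow> (\<lambda>w. gb x R (c + w s)) \<in> borel_measurable P"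
  unfolding gb_def using coord[OF fw] by measurable

lemma Phi_int:
  assumes P: "P \<in> \<P>" and T: "0 \<le> T"
  shows "integrable P (Phi x R T m)"
proof -
  have fin: "finite_measure P" using prob[OF fw P] by (simp add: prob_space.finite_measure)
  have "(\<lambda>w. gb x R (0 + w (real (Suc k) * T))) \<in> borel_measurable P" for k
    using gb_meas[OF P, of "real (Suc k) * T" x R 0] T by simp
  then have m: "Phi x R T m \<in> borel_measurable P" unfolding Phi_def by simp
  show ?thesis
    by (rule finite_measure.integrable_const_bound[OF fin _ m, where B=1])
      (intro AE_I2, metis Phi_ge0 Phi_le1 abs_of_nonneg real_norm_def)
qed

lemma int_le1:
  fixes f :: "(real \<Rightarrow> real^'d) \<Rightarrow> real"
  assumes P: "P \<in> \<P>" and f: "\<And>w. f w \<le> 1"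
  shows "integral\<^sup>L P f \<le> 1"
proof -
  have "integral\<^sup>L P f \<le> integral\<^sup>L P (\<lambda>w. 1)"
    by (rule int_le) (use prob[OF fw P] f in \<open>auto simp: prob_space.finite_measure finite_measure.integrable_const\<close>)
  then show ?thesis using prob[OF fw P] by (simp add: prob_space.prob_space)
qed

lemma sl_pos: "0 < sl" using fw unfolding G_framework_def condA_def by auto

lemma anti_P:
  assumes P: "P \<in> \<P>" and N: "0 < N" and R: "2 * R\<^sup>2 \<le> real N * (sl\<^sup>2 * real CARD('d))"
    and M4: "0 \<le> M4" "\<And>Q. Q \<in> \<P> \<Longrightarrow> integral\<^sup>L Q (\<lambda>w. norm (w (real N)) ^ 4) \<le> M4"
  shows "integral\<^sup>L P (\<lambda>w. gb x R (c + w (real N))) \<le>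
      1 - (real N * (sl\<^sup>2 * real CARD('d)))\<^sup>2 / (32 * (M4 + real N * (sl\<^sup>2 * real CARD('d)) + 1)\<^sup>2)"
proof (rule anti)
  have T: "0 \<le> real N" by simp
  show "prob_space P" by (rule prob[OF fw P])
  show "(\<lambda>w. w (real N)) \<in> borel_measurable P" by (rule coord[OF fw P T])
  show "integrable P (\<lambda>w. (norm (w (real N)))\<^sup>2)" by (rule sq_int[OF fw T P])
  show "integrable P (\<lambda>w. norm (w (real N)) ^ 4)" by (rule mom_int[OF fw T P])
  show "integrable P (\<lambda>w. (c + x) \<bullet> w (real N))" by (rule inner_int[OF fw T P])
  show "integral\<^sup>L P (\<lambda>w. (c + x) \<bullet> w (real N)) = 0" by (rule mean0[OF fw T P])
  show "0 < real N * (sl\<^sup>2 * real CARD('d))" using N sl_pos by simp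
  show "2 * R\<^sup>2 \<le> real N * (sl\<^sup>2 * real CARD('d))" by (rule R)
  show "0 \<le> M4" by (rule M4(1))
  show "real N * (sl\<^sup>2 * real CARD('d)) \<le> integral\<^sup>L P (\<lambda>w. (norm (w (real N)))\<^sup>2)"
    by (rule var_lb[OF fw P])
  show "integral\<^sup>L P (\<lambda>w. norm (w (real N)) ^ 4) \<le> M4" by (rule M4(2)[OF P])
qed

end


lemma phiS_eq: "phiS x R m (cyl (Suc m) (\<lambda>i. real i * T) w) y = Phi x R T m w * gb x R (w (real m * T) + y)"
proof -
  have "(\<Prod>k<m. gb x R (cyl (Suc m) (\<lambda>i. real i * T) w (Suc k))) = (\<Prod>k<m. gb x R (w (real (Suc k) * T)))"
    by (rule prod.cong) (auto simp: cyl_def)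
  moreover have "cyl (Suc m) (\<lambda>i. real i * T) w m = w (real m * T)" by (simp add: cyl_def)
  ultimately show ?thesis unfolding phiS_def Phi_def by simp
qed

lemma Phi_Suc: "Phi x R T (Suc m) w = Phi x R T m w * gb x R (w (real m * T) + (w (real m * T + T) - w (real m * T)))"
proof -
  have "real m * T + T = real (Suc m) * T" by (simp add: algebra_simps)
  then show ?thesis unfolding Phi_def by simp
qed

context
  fixes \<P> :: "(real \<Rightarrow> real^'d) measure set" and sl sh :: real
  assumes fw: "G_framework \<P> sl sh"
begin

lemma Phi_ind:
  assumes T: "0 \<le> T" and q0: "0 \<le> q"
    and step: "\<And>P c. P \<in> \<P> \<Longrightarrow> integral\<^sup>L P (\<lambda>w. gb x R (c + w T)) \<le> q"
  shows "\<forall>P\<in>\<P>. integral\<^sup>L P (Phi x R T m) \<le> q ^ m"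
proof (induction m)
  case 0
  show ?case
  proof
    fix P assume P: "P \<in> \<P>"
    have "Phi x R T 0 = (\<lambda>w. 1)" unfolding Phi_def by (rule ext) simp
    then show "integral\<^sup>L P (Phi x R T 0) \<le> q ^ 0" using prob[OF fw P] by (simp add: prob_space.prob_space)
  qed
next
  case (Suc m)
  define t where "t = real m * T"
  define ts where "ts = (\<lambda>i::nat. real i * T)"
  have t0: "0 \<le> t" unfolding t_def using T by simp
  have eq1: "Phi x R T (Suc m) = (\<lambda>w. phiS x R m (cyl (Suc m) ts w) (w (t + T) - w t))"
    unfolding ts_def t_def by (rule ext) (simp add: phiS_eq Phi_Suc)
  have inner: "upE \<P> (\<lambda>w'. phiS x R m (cyl (Suc m) ts w) (w' (t + T) - w' t)) \<le> q * Phi x R T m w" for w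
  proof (rule upE_le[OF ne[OF fw]])
    fix P'' assume P'': "P'' \<in> \<P>"
    define c where "c = w t"
    have "integral\<^sup>L P'' (\<lambda>w'. phiS x R m (cyl (Suc m) ts w) (w' (t + T) - w' t))
        = integral\<^sup>L P'' (\<lambda>w'. Phi x R T m w * gb x R (c + (w' (t + T) - w' t)))"
      unfolding ts_def c_def t_def phiS_eq ..
    also have "\<dots> = Phi x R T m w * integral\<^sup>L P'' (\<lambda>w'. gb x R (c + (w' (t + T) - w' t)))" by simp
    also have "\<dots> \<le> Phi x R T m w * q"
    proof (rule mult_left_mono[OF _ Phi_ge0])
      have "integral\<^sup>L P'' (\<lambda>w'. gb x R (c + (w' (t + T) - w' t))) \<le> upE \<P> (\<lambda>w'. gb x R (c + (w' (t + T) - w' t)))"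
        by (rule upE_ge[OF P'']) (rule int_le1[OF fw], assumption, rule gb_le1)
      also have "\<dots> = upE \<P> (\<lambda>w'. gb x R (c + w' T))"
        using stat[OF fw t0 T lip1_gb[of x R c]] by simp
      also have "\<dots> \<le> q" by (rule upE_le[OF ne[OF fw]]) (rule step)
      finally show "integral\<^sup>L P'' (\<lambda>w'. gb x R (c + (w' (t + T) - w' t))) \<le> q" .
    qed
    finally show "integral\<^sup>L P'' (\<lambda>w'. phiS x R m (cyl (Suc m) ts w) (w' (t + T) - w' t)) \<le> q * Phi x R T m w"
      by (simp add: mult.commute)
  qed
  show ?case
  proof
    fix P assume P: "P \<in> \<P>"
    have "integral\<^sup>L P (Phi x R T (Suc m)) \<le> upE \<P> (Phi x R T (Suc m))"
      by (rule upE_ge[OF P]) (rule int_le1[OF fw], assumption, rule Phi_le1)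
    also have "\<dots> = upE \<P> (\<lambda>w. upE \<P> (\<lambda>w'. phiS x R m (cyl (Suc m) ts w) (w' (t + T) - w' t)))"
      unfolding eq1 by (rule indep[OF fw t0 T]) (auto simp: ts_def t_def T lip_phiS intro: mult_right_mono)
    also have "\<dots> \<le> q ^ Suc m"
    proof (rule upE_le[OF ne[OF fw]])
      fix P' assume P': "P' \<in> \<P>"
      have "integral\<^sup>L P' (\<lambda>w. upE \<P> (\<lambda>w'. phiS x R m (cyl (Suc m) ts w) (w' (t + T) - w' t)))
          \<le> integral\<^sup>L P' (\<lambda>w. q * Phi x R T m w)"
      proof (rule int_le)
        show "integrable P' (\<lambda>w. q * Phi x R T m w)" using Phi_int[OF fw P' T] by simp
      qed (use inner mult_nonneg_nonneg[OF q0 Phi_ge0] in auto)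
      also have "\<dots> = q * integral\<^sup>L P' (Phi x R T m)" by simp
      also have "\<dots> \<le> q * q ^ m" using Suc.IH P' q0 by (intro mult_left_mono) auto
      finally show "integral\<^sup>L P' (\<lambda>w. upE \<P> (\<lambda>w'. phiS x R m (cyl (Suc m) ts w) (w' (t + T) - w' t))) \<le> q ^ Suc m"
        by simp
    qed
    finally show "integral\<^sup>L P (Phi x R T (Suc m)) \<le> q ^ Suc m" .
  qed
qed

end


context
  fixes \<P> :: "(real \<Rightarrow> real^'d) measure set" and sl sh :: real
  assumes fw: "G_framework \<P> sl sh"
begin

lemma cap_nonneg: "0 \<le> cap \<P> A"
proof -
  obtain P0 where P0: "P0 \<in> \<P>" using ne[OF fw] by blast
  have "measure P0 A \<le> cap \<P> A" unfolding cap_def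
    by (rule cSUP_upper[OF P0]) (auto intro!: bdd_aboveI2[where M=1] prob_space.prob_le_1 prob[OF fw])
  then show ?thesis by (meson measure_nonneg order.trans)
qed

lemma cap_le: "(\<And>P. P \<in> \<P> \<Longrightarrow> measure P A \<le> c) \<Longrightarrow> cap \<P> A \<le> c"
  unfolding cap_def using ne[OF fw] by (intro cSUP_least) auto

lemma hit_lt:
  assumes "ereal s < hit_time x b w" "0 \<le> s"
  shows "BESQ x s w < b"
proof (rule ccontr)
  assume "\<not> BESQ x s w < b"
  then have "ereal s \<in> {ereal t | t. 0 \<le> t \<and> BESQ x t w \<ge> b}" using assms(2) by auto
  then have "hit_time x b w \<le> ereal s" unfolding hit_time_def by (rule Inf_lower)
  then show False using assms(1) by simp
qed

lemma part1:
  fixes x :: "real^'d" and b :: real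
  assumes b: "b > (norm x)\<^sup>2"
  shows "((\<lambda>t. cap \<P> {w \<in> Omega. hit_time x b w > ereal t}) \<longlongrightarrow> 0) at_top"
proof -
  define R where "R = sqrt b + 1"
  define \<sigma> where "\<sigma> = sl\<^sup>2 * real CARD('d)"
  have \<sigma>0: "0 < \<sigma>" unfolding \<sigma>_def using sl_pos[OF fw] by simp
  define N where "N = nat \<lceil>2 * R\<^sup>2 / \<sigma>\<rceil> + 1"
  have N0: "0 < N" unfolding N_def by simp
  have "2 * R\<^sup>2 / \<sigma> \<le> real N" unfolding N_def by linarith
  then have NR: "2 * R\<^sup>2 \<le> real N * \<sigma>" using \<sigma>0 by (simp add: divide_le_eq)
  define T where "T = real N"
  have T0: "0 \<le> T" unfolding T_def by simp
  obtain B where B: "\<And>P. P \<in> \<P> \<Longrightarrow> integral\<^sup>L P (\<lambda>w. norm (w T) ^ 4) \<le> B"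
    using mom_bdd[OF fw T0, of 4] by blast
  define M4 where "M4 = max B 0"
  have M4: "0 \<le> M4" "\<And>Q. Q \<in> \<P> \<Longrightarrow> integral\<^sup>L Q (\<lambda>w. norm (w (real N)) ^ 4) \<le> M4"
    unfolding M4_def using B unfolding T_def by (auto intro: max.coboundedI1)
  define V where "V = real N * \<sigma>"
  define q where "q = 1 - V\<^sup>2 / (32 * (M4 + V + 1)\<^sup>2)"
  have V0: "0 < V" unfolding V_def using N0 \<sigma>0 by simp
  have q1: "q < 1" unfolding q_def using V0 M4 by (simp add: add_pos_nonneg)
  have q0: "0 \<le> q"
  proof -
    have VM: "V \<le> M4 + V + 1" using M4 by simp
    then have "V\<^sup>2 \<le> (M4 + V + 1)\<^sup>2" using V0 by (intro power_mono) auto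
    moreover have "0 \<le> (M4 + V + 1)\<^sup>2" by simp
    ultimately have "V\<^sup>2 \<le> 32 * (M4 + V + 1)\<^sup>2" by linarith
    moreover have "0 < 32 * (M4 + V + 1)\<^sup>2" using V0 M4 by (simp add: add_pos_nonneg)
    ultimately have "V\<^sup>2 / (32 * (M4 + V + 1)\<^sup>2) \<le> 1" by (simp add: pos_divide_le_eq)
    then show ?thesis unfolding q_def by simp
  qed
  have step: "\<And>P c. P \<in> \<P> \<Longrightarrow> integral\<^sup>L P (\<lambda>w. gb x R (c + w T)) \<le> q"
    unfolding q_def V_def T_def \<sigma>_def
    by (rule anti_P[OF fw _ N0 _ M4]) (use NR in \<open>auto simp: \<sigma>_def\<close>)
  have ind: "\<And>P. P \<in> \<P> \<Longrightarrow> integral\<^sup>L P (Phi x R T m) \<le> q ^ m" for m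
    using Phi_ind[OF fw T0 q0 step] by blast
  have key: "cap \<P> {w \<in> Omega. hit_time x b w > ereal t} \<le> q ^ m" if t: "real m * T \<le> t" for m t
  proof (rule cap_le)
    fix P assume P: "P \<in> \<P>"
    define A where "A = {w \<in> Omega. hit_time x b w > ereal t}"
    have "measure P A = integral\<^sup>L P (indicator A)" using spc[OF fw P] unfolding A_def
      by (simp add: Int_absorb2 subsetI)
    also have "\<dots> \<le> integral\<^sup>L P (Phi x R T m)"
    proof (rule int_le)
      show "integrable P (Phi x R T m)" by (rule Phi_int[OF fw P T0])
      show "0 \<le> Phi x R T m w" for w by (rule Phi_ge0)
      fix w assume w: "w \<in> space P"
      show "indicator A w \<le> Phi x R T m w"
      proof (cases "w \<in> A")
        case False then show ?thesis by (simp add: Phi_ge0)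
      next
        case True
        have "gb x R (w (real (Suc k) * T)) = 1" if k: "k < m" for k
        proof -
          define s where "s = real (Suc k) * T"
          have s0: "0 \<le> s" unfolding s_def using T0 by simp
          have "s \<le> real m * T" unfolding s_def using k T0 by (intro mult_right_mono) auto
          then have "ereal s \<le> ereal t" using t by simp
          moreover have "ereal t < hit_time x b w" using True unfolding A_def by simp
          ultimately have "ereal s < hit_time x b w" by (rule le_less_trans)
          then have "BESQ x s w < b" by (rule hit_lt[OF _ s0])
          then have "(norm (w s + x))\<^sup>2 < b" unfolding BESQ_def .
          then have "norm (w s + x) < sqrt b" by (rule real_less_rsqrt)
          then show ?thesis unfolding s_def by (intro gb_one) (simp add: R_def)
        qed
        then have "Phi x R T m w = 1" unfolding Phi_def by simp
        then show ?thesis using True by simp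
      qed
    qed
    also have "\<dots> \<le> q ^ m" by (rule ind[OF P])
    finally show "measure P {w \<in> Omega. ereal t < hit_time x b w} \<le> q ^ m" unfolding A_def .
  qed
  show ?thesis
    unfolding tendsto_iff
  proof (intro allI impI)
    fix e :: real assume e: "0 < e"
    have "(\<lambda>n. q ^ n) \<longlonglongrightarrow> 0" using q0 q1 by (intro LIMSEQ_power_zero) simp
    from LIMSEQ_D[OF this e] obtain m where "\<forall>n\<ge>m. norm (q ^ n - 0) < e" by blast
    then have "norm (q ^ m) < e" by simp
    then have m: "q ^ m < e" by simp
    show "eventually (\<lambda>t. dist (cap \<P> {w \<in> Omega. hit_time x b w > ereal t}) 0 < e) at_top"
      unfolding eventually_at_top_linorder
    proof (intro exI allI impI)
      fix t assume "real m * T \<le> t"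
      then have "cap \<P> {w \<in> Omega. hit_time x b w > ereal t} \<le> q ^ m" by (rule key)
      then show "dist (cap \<P> {w \<in> Omega. hit_time x b w > ereal t}) 0 < e"
        using cap_nonneg m by simp
    qed
  qed
qed

end


definition SS :: "real \<Rightarrow> (real \<Rightarrow> 'a::real_normed_vector) \<Rightarrow> real" where
  "SS t w = (SUP s\<in>\<rat> \<inter> {0..t}. norm (w s))"

lemma Omega_cont: "w \<in> Omega \<Longrightarrow> continuous_on {0..t} w"
  unfolding Omega_def by (auto intro: continuous_on_subset)

lemma SS_bdd:
  assumes w: "w \<in> Omega" and A: "A \<subseteq> {0..t}"
  shows "bdd_above ((\<lambda>s. norm (w s)) ` A)"
proof -
  have "compact ((\<lambda>s. norm (w s)) ` {0..t})"
    by (intro compact_continuous_image continuous_on_norm Omega_cont[OF w]) auto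
  then have "bdd_above ((\<lambda>s. norm (w s)) ` {0..t})" by (intro bounded_imp_bdd_above compact_imp_bounded)
  from this show ?thesis by (rule bdd_above_mono) (use A in auto)
qed

lemma SS_ne: "0 \<le> (t::real) \<Longrightarrow> \<rat> \<inter> {0..t} \<noteq> {}"
proof -
  assume "0 \<le> t"
  then have "0 \<in> \<rat> \<inter> {0..t}" using Rats_0 by simp
  then show ?thesis by blast
qed

lemma SS_upper_rat: "w \<in> Omega \<Longrightarrow> s \<in> \<rat> \<inter> {0..t} \<Longrightarrow> norm (w s) \<le> SS t w"
  unfolding SS_def by (rule cSUP_upper) (auto intro: SS_bdd[of _ _ t])

lemma SS_upper:
  assumes w: "w \<in> Omega" and s: "0 \<le> s" "s \<le> t"
  shows "norm (w s) \<le> SS t w"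
proof -
  define q where "q n = real_of_int \<lfloor>s * real (Suc n)\<rfloor> / real (Suc n)" for n
  have qQ: "q n \<in> \<rat> \<inter> {0..t}" for n
  proof -
    have "q n \<in> \<rat>" unfolding q_def by (intro Rats_divide Rats_of_int Rats_of_nat)
    moreover have "0 \<le> q n" unfolding q_def using s by simp
    moreover have "q n \<le> s" unfolding q_def using s
      by (simp add: divide_le_eq)
    ultimately show ?thesis using s by auto
  qed
  have ql: "s - inverse (real (Suc n)) \<le> q n" for n
  proof -
    have "s * real (Suc n) - 1 \<le> real_of_int \<lfloor>s * real (Suc n)\<rfloor>" by linarith
    then have "(s * real (Suc n) - 1) / real (Suc n) \<le> q n" unfolding q_def
      by (intro divide_right_mono) auto
    then show ?thesis by (simp add: field_simps)
  qed
  have qu: "q n \<le> s" for n unfolding q_def using s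
    by (simp add: divide_le_eq)
  have "q \<longlonglongrightarrow> s"
  proof (rule real_tendsto_sandwich[where f="\<lambda>n. s - inverse (real (Suc n))" and h="\<lambda>n. s"])
    show "\<forall>\<^sub>F n in sequentially. s - inverse (real (Suc n)) \<le> q n" using ql by simp
    show "\<forall>\<^sub>F n in sequentially. q n \<le> s" using qu by simp
    show "(\<lambda>n. s - inverse (real (Suc n))) \<longlonglongrightarrow> s"
      using tendsto_diff[OF tendsto_const LIMSEQ_inverse_real_of_nat, of s] by simp
  qed simp
  then have "(\<lambda>n. w (q n)) \<longlonglongrightarrow> w s"
    by (rule continuous_on_tendsto_compose[OF Omega_cont[OF w, of t]]) (use qQ s in auto)
  then have "(\<lambda>n. norm (w (q n))) \<longlonglongrightarrow> norm (w s)" by (rule tendsto_norm)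
  then show ?thesis
    by (rule LIMSEQ_le_const2) (use SS_upper_rat[OF w qQ] in auto)
qed

lemma SS_close:
  assumes u: "u \<in> Omega" and v: "v \<in> Omega" and t: "0 \<le> t"
    and d: "\<And>s. s \<in> {0..t} \<Longrightarrow> dist (u s) (v s) \<le> e"
  shows "SS t u \<le> SS t v + e"
  unfolding SS_def
proof (rule cSUP_least[OF SS_ne[OF t]])
  fix s assume s: "s \<in> \<rat> \<inter> {0..t}"
  have "norm (u s) \<le> norm (v s) + dist (u s) (v s)"
    by (metis dist_norm norm_triangle_sub add.commute)
  also have "\<dots> \<le> (SUP s\<in>\<rat> \<inter> {0..t}. norm (v s)) + e"
    using SS_upper_rat[OF v s] d[of s] s unfolding SS_def by auto
  finally show "norm (u s) \<le> (SUP s\<in>\<rat> \<inter> {0..t}. norm (v s)) + e" .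
qed



definition fL :: "real \<Rightarrow> real \<Rightarrow> (real \<Rightarrow> 'a::real_normed_vector) \<Rightarrow> real" where
  "fL t L w = min 1 (max 0 (SS t w - L))"

lemma fL_ge0: "0 \<le> fL t L w" and fL_le1: "fL t L w \<le> 1" unfolding fL_def by auto

lemma fL_lip: "\<bar>fL t L u - fL t L v\<bar> \<le> \<bar>SS t u - SS t v\<bar>"
  unfolding fL_def by (simp add: abs_le_iff) linarith

lemma bcont_fL:
  assumes t: "0 \<le> t"
  shows "bcont_fun (fL t L :: (real \<Rightarrow> 'a::real_normed_vector) \<Rightarrow> real)"
  unfolding bcont_fun_def
proof (intro conjI allI impI)
  show "\<exists>K. \<forall>w\<in>Omega. \<bar>fL t L (w :: real \<Rightarrow> 'a) \<bar> \<le> K"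
    by (intro exI[of _ 1]) (metis fL_ge0 fL_le1 abs_of_nonneg)
  fix ws :: "nat \<Rightarrow> real \<Rightarrow> 'a" and w
  assume ws: "\<forall>n. ws n \<in> Omega" and w: "w \<in> Omega" and lu: "lu_conv ws w"
  show "(\<lambda>n. fL t L (ws n)) \<longlonglongrightarrow> fL t L w"
    unfolding tendsto_iff
  proof (intro allI impI)
    fix e :: real assume e: "0 < e"
    have "eventually (\<lambda>n. \<forall>s\<in>{0..t}. dist (ws n s) (w s) < e / 2) sequentially"
      using lu[unfolded lu_conv_def, rule_format, of "e / 2" t] e by simp
    then show "eventually (\<lambda>n. dist (fL t L (ws n)) (fL t L w) < e) sequentially"
    proof eventually_elim
      case (elim n)
      have "SS t (ws n) \<le> SS t w + e / 2"
        by (rule SS_close[OF ws[rule_format] w t]) (use elim in \<open>auto intro: less_imp_le\<close>)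
      moreover have "SS t w \<le> SS t (ws n) + e / 2"
        by (rule SS_close[OF w ws[rule_format] t]) (use elim in \<open>auto intro: less_imp_le simp: dist_commute\<close>)
      ultimately have "\<bar>SS t (ws n) - SS t w\<bar> < e" using e by (simp add: abs_less_iff)
      then show ?case using fL_lip[of t L "ws n" w] by (simp add: dist_real_def)
    qed
  qed
qed

context
  fixes \<P> :: "(real \<Rightarrow> real^'d) measure set" and sl sh :: real
  assumes fw: "G_framework \<P> sl sh"
begin

lemma SS_meas: "P \<in> \<P> \<Longrightarrow> 0 \<le> t \<Longrightarrow> SS t \<in> borel_measurable P"
proof -
  assume P: "P \<in> \<P>" and t: "0 \<le> t"
  have "(\<lambda>w. SUP s\<in>\<rat> \<inter> {0..t}. norm (w s)) \<in> borel_measurable P"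
  proof (rule borel_measurable_cSUP)
    show "countable (\<rat> \<inter> {0..t})" using countable_rat by (rule countable_Int1)
    fix s assume "s \<in> \<rat> \<inter> {0..t}"
    then show "(\<lambda>w. norm (w s)) \<in> borel_measurable P" using coord[OF fw P] by auto
  next
    fix w assume "w \<in> space P"
    then show "bdd_above ((\<lambda>s. norm (w s)) ` (\<rat> \<inter> {0..t}))"
      using spc[OF fw P] by (intro SS_bdd[of _ _ t]) auto
  qed
  then show ?thesis unfolding SS_def[abs_def] .
qed

lemma fL_int: "P \<in> \<P> \<Longrightarrow> 0 \<le> t \<Longrightarrow> integrable P (fL t L)"
proof -
  assume P: "P \<in> \<P>" and t: "0 \<le> t"
  have fin: "finite_measure P" using prob[OF fw P] by (simp add: prob_space.finite_measure)
  have m: "fL t L \<in> borel_measurable P" unfolding fL_def[abs_def] using SS_meas[OF P t] by measurable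
  show ?thesis
    by (rule finite_measure.integrable_const_bound[OF fin _ m, where B=1])
      (intro AE_I2, metis fL_ge0 fL_le1 abs_of_nonneg real_norm_def)
qed

lemma fL_lim:
  assumes P: "P \<in> \<P>" and t: "0 \<le> t"
  shows "(\<lambda>L::nat. integral\<^sup>L P (fL t (real L))) \<longlonglongrightarrow> 0"
proof -
  have "(\<lambda>L::nat. integral\<^sup>L P (fL t (real L))) \<longlonglongrightarrow> integral\<^sup>L P (\<lambda>w. 0)"
  proof (rule integral_dominated_convergence[where w="\<lambda>w. 1"])
    show "(\<lambda>w. 0::real) \<in> borel_measurable P" by simp
    show "fL t (real L) \<in> borel_measurable P" for L using fL_int[OF P t] by auto
    show "integrable P (\<lambda>w. 1::real)" using prob[OF fw P]
      by (simp add: prob_space.finite_measure finite_measure.integrable_const)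
    show "AE w in P. norm (fL t (real L) w) \<le> 1" for L
      by (intro AE_I2) (metis fL_ge0 fL_le1 abs_of_nonneg real_norm_def)
    show "AE w in P. (\<lambda>L. fL t (real L) w) \<longlonglongrightarrow> 0"
    proof (intro AE_I2 tendsto_eventually)
      fix w
      obtain N where N: "SS t w \<le> real N" using real_arch_simple by blast
      show "eventually (\<lambda>L. fL t (real L) w = 0) sequentially"
        unfolding eventually_sequentially
      proof (intro exI allI impI)
        fix L assume "N \<le> L"
        then have "SS t w - real L \<le> 0" using N by simp
        then show "fL t (real L) w = 0" unfolding fL_def by simp
      qed
    qed
  qed
  then show ?thesis by simp
qed

end


context
  fixes \<P> :: "(real \<Rightarrow> real^'d) measure set" and sl sh :: real
  assumes fw: "G_framework \<P> sl sh"
begin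

lemma hit_sub:
  fixes x :: "real^'d"
  assumes w: "w \<in> Omega" and h: "hit_time x b w < ereal t" and L: "0 \<le> L"
    and b: "(L + 1 + norm x)\<^sup>2 \<le> b"
  shows "1 \<le> SS t w - L"
proof -
  from h obtain y where y: "y \<in> {ereal s | s. 0 \<le> s \<and> BESQ x s w \<ge> b}" "y < ereal t"
    unfolding hit_time_def Inf_less_iff by blast
  then obtain s where s: "y = ereal s" "0 \<le> s" "b \<le> BESQ x s w" by blast
  have st: "s \<le> t" using y(2) s(1) by simp
  have "(L + 1 + norm x)\<^sup>2 \<le> (norm (w s + x))\<^sup>2" using b s(3) unfolding BESQ_def by simp
  then have "L + 1 + norm x \<le> norm (w s + x)" by (rule power2_le_imp_le) simp
  moreover have "norm (w s + x) \<le> norm (w s) + norm x" by (rule norm_triangle_ineq)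
  moreover have "norm (w s) \<le> SS t w" by (rule SS_upper[OF w s(2) st])
  ultimately show ?thesis by linarith
qed

lemma meas_le_int:
  assumes P: "P \<in> \<P>" and t: "0 \<le> t" and A: "A \<subseteq> Omega" and h: "\<And>w. w \<in> A \<Longrightarrow> 1 \<le> SS t w - L"
  shows "measure P A \<le> integral\<^sup>L P (fL t L)"
proof -
  have "measure P A = integral\<^sup>L P (indicator A)" using spc[OF fw P] A
    by (simp add: Int_absorb2)
  also have "\<dots> \<le> integral\<^sup>L P (fL t L)"
  proof (rule int_le)
    show "integrable P (fL t L)" by (rule fL_int[OF fw P t])
    show "0 \<le> fL t L w" for w by (rule fL_ge0)
    show "indicator A w \<le> fL t L w" for w
    proof (cases "w \<in> A")
      case True then show ?thesis using h[OF True] by (simp add: fL_def)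
    qed (simp add: fL_ge0)
  qed
  finally show ?thesis .
qed

lemma part2:
  fixes x :: "real^'d" and t :: real
  assumes t: "0 \<le> t"
  shows "((\<lambda>b. cap \<P> {w \<in> Omega. hit_time x b w < ereal t}) \<longlongrightarrow> 0) at_top"
proof (rule ccontr)
  define Ab where "Ab b = {w \<in> Omega. hit_time x b w < ereal t}" for b
  assume "\<not> ?thesis"
  then obtain e :: real where e: "0 < e" and ne1: "\<not> eventually (\<lambda>b. dist (cap \<P> (Ab b)) 0 < e) at_top"
    unfolding tendsto_iff Ab_def by blast
  have "\<forall>n::nat. \<exists>b. real n \<le> b \<and> e \<le> cap \<P> (Ab b)"
  proof
    fix n :: nat
    from ne1 have "\<not> (\<forall>b\<ge>real n. dist (cap \<P> (Ab b)) 0 < e)"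
      unfolding eventually_at_top_linorder by blast
    then show "\<exists>b. real n \<le> b \<and> e \<le> cap \<P> (Ab b)"
      using cap_nonneg[OF fw] by (auto simp: dist_real_def not_less)
  qed
  then obtain bs where bs: "\<And>n. real n \<le> bs n" "\<And>n. e \<le> cap \<P> (Ab (bs n))" by metis
  have "\<forall>n. \<exists>P\<in>\<P>. e / 2 < measure P (Ab (bs n))"
  proof
    fix n
    have "e / 2 < cap \<P> (Ab (bs n))" using bs(2)[of n] e by simp
    then show "\<exists>P\<in>\<P>. e / 2 < measure P (Ab (bs n))" unfolding cap_def
      by (subst (asm) less_cSUP_iff[OF ne[OF fw]])
        (auto intro!: bdd_aboveI2[where M=1] prob_space.prob_le_1 prob[OF fw])
  qed
  then obtain Ps where Ps: "\<And>n. Ps n \<in> \<P>" "\<And>n. e / 2 < measure (Ps n) (Ab (bs n))" by metis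
  have wc: "weakly_compact \<P>" using fw unfolding G_framework_def by blast
  then obtain r P where r: "strict_mono r" and P: "P \<in> \<P>" and wcv: "weak_conv_paths (Ps \<circ> r) P"
    unfolding weakly_compact_def using Ps(1) by blast
  have lowL: "e / 2 \<le> integral\<^sup>L P (fL t (real L))" for L :: nat
  proof -
    have lim: "(\<lambda>n. integral\<^sup>L (Ps (r n)) (fL t (real L))) \<longlonglongrightarrow> integral\<^sup>L P (fL t (real L))"
      using wcv bcont_fL[OF t, of "real L"] unfolding weak_conv_paths_def by auto
    show ?thesis
    proof (rule LIMSEQ_le_const[OF lim])
      obtain N :: nat where N: "(real L + 1 + norm x)\<^sup>2 \<le> real N" using real_arch_simple by blast
      show "\<exists>N. \<forall>n\<ge>N. e / 2 \<le> integral\<^sup>L (Ps (r n)) (fL t (real L))"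
      proof (intro exI allI impI)
        fix n assume n: "N \<le> n"
        have "real n \<le> real (r n)" using seq_suble[OF r, of n] by simp
        then have bn: "(real L + 1 + norm x)\<^sup>2 \<le> bs (r n)" using N n bs(1)[of "r n"] by linarith
        have "measure (Ps (r n)) (Ab (bs (r n))) \<le> integral\<^sup>L (Ps (r n)) (fL t (real L))"
        proof (rule meas_le_int[OF Ps(1) t])
          show "Ab (bs (r n)) \<subseteq> Omega" unfolding Ab_def by auto
          fix w assume "w \<in> Ab (bs (r n))"
          then show "1 \<le> SS t w - real L" unfolding Ab_def
            using hit_sub[OF _ _ _ bn] by auto
        qed
        then show "e / 2 \<le> integral\<^sup>L (Ps (r n)) (fL t (real L))" using Ps(2)[of "r n"] by linarith
      qed
    qed
  qed
  have "e / 2 \<le> 0"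
    by (rule LIMSEQ_le_const[OF fL_lim[OF fw P t]]) (use lowL in auto)
  then show False using e by simp
qed

end


theorem lemma3p8:
  fixes \<P> :: "(real \<Rightarrow> real^'d) measure set" and sl sh :: real and x :: "real^'d"
  assumes "G_framework \<P> sl sh"
    and "(norm x)\<^sup>2 > 0"
  shows "(\<forall>b > (norm x)\<^sup>2.
            ((\<lambda>t. cap \<P> {w \<in> Omega. hit_time x b w > ereal t}) \<longlongrightarrow> 0) at_top) \<and>
         (\<forall>t \<ge> 0.
            ((\<lambda>b. cap \<P> {w \<in> Omega. hit_time x b w < ereal t}) \<longlongrightarrow> 0) at_top)"
  using part1[OF assms(1)] part2[OF assms(1)] by blast

end
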